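(* Let $U$ be a unitary on a finite-dimensional Hilbert space $\mathcal{H}$ and consider a verification protocol for $U$ with set of test states $\mathscr{T}=\{|\psi_j\rangle\}_j$ and effective set $\mathscr{T}_{\mathrm{eff}}$. (i) If $U$ can be verified reliably by this protocol, then $\mathscr{T}$ is an identification set for $U$. (ii) If $\mathscr{T}_{\mathrm{eff}}$ is an identification set for $U$, then $U$ can be verified reliably by this protocol. (iii) If the protocol is ordinary, then $U$ can be verified reliably by it if and only if $\mathscr{T}$ is an identification set for $U$.
   Context: A verification protocol for $U$ consists of a finite set $\mathscr{T}=\{|\psi_j\rangle\}$ of pure test states, each chosen with probability $p_j>0$, and for each $j$ a verification operator $\Omega_j=\sum_lq_{jl}E_{jl}$ for the output state $U|\psi_j\rangle$, where each $E_{jl}$ satisfies $0\le E_{jl}\le I$ and $E_{jl}U|\psi_j\rangle=U|\psi_j\rangle$, and $q_{jl}>0$ sum to 1. A quantum channel $\Lambda$ passes test $j$ with probability $\mathrm{tr}[\Omega_j\Lambda(|\psi_j\rangle\langle\psi_j|)]$. $U$ is verified reliably if the unitary channel $\rho\mapsto U\rho U^\dagger$ is the only quantum channel on $\mathcal{H}$ passing every test with certainty. Let $\nu_j=1-\beta(\Omega_j)$, where $\beta(\Omega_j)$ is the second largest eigenvalue of $\Omega_j$; $|\psi_j\rangle$ is effective if $\nu_j>0$, $\mathscr{T}_{\mathrm{eff}}$ is the set of effective test states, and the protocol is ordinary if all $\nu_j>0$. A set $\mathscr{S}$ of pure states is an identification set for $U$ if every quantum channel $\Lambda$ with $\Lambda(|\psi\rangle\langle\psi|)=U|\psi\rangle\langle\psi|U^\dagger$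 for all $|\psi\rangle\in\mathscr{S}$ satisfies $\Lambda(\rho)=U\rho U^\dagger$ for all density operators $\rho$ on $\mathcal{H}$. *)

theory Defs
  imports "Jordan_Normal_Form.Schur_Decomposition" "Jordan_Normal_Form.Char_Poly"
begin

(* The Hilbert space H is C^n; operators on H are complex n x n matrices (JNF "mat"). *)

definition mtrace :: "complex mat \<Rightarrow> complex" where
  "mtrace A = (\<Sum>i<dim_row A. A $$ (i,i))"

definition psd :: "nat \<Rightarrow> complex mat \<Rightarrow> bool" where
  "psd n A \<longleftrightarrow> A \<in> carrier_mat n n \<and>
     (\<forall>v \<in> carrier_vec n. Im (conjugate v \<bullet> (A *\<^sub>v v)) = 0 \<and> Re (conjugate v \<bullet> (A *\<^sub>v v)) \<ge> 0)"

definition density_op :: "nat \<Rightarrow> complex mat \<Rightarrow> bool" where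
  "density_op n \<rho> \<longleftrightarrow> psd n \<rho> \<and> mtrace \<rho> = 1"

definition unitary_mat :: "nat \<Rightarrow> complex mat \<Rightarrow> bool" where
  "unitary_mat n U \<longleftrightarrow> U \<in> carrier_mat n n \<and> U * mat_adjoint U = 1\<^sub>m n \<and> mat_adjoint U * U = 1\<^sub>m n"

definition pure_state :: "nat \<Rightarrow> complex vec \<Rightarrow> bool" where
  "pure_state n \<psi> \<longleftrightarrow> \<psi> \<in> carrier_vec n \<and> conjugate \<psi> \<bullet> \<psi> = 1"

definition proj :: "nat \<Rightarrow> complex vec \<Rightarrow> complex mat" where
  "proj n \<psi> = mat n n (\<lambda>(i,j). \<psi> $ i * cnj (\<psi> $ j))"

(* block (a,b) of an operator X on H \<otimes> C^k, with basis index i*k+a for |i> \<otimes> |a> *)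
definition blk :: "nat \<Rightarrow> nat \<Rightarrow> complex mat \<Rightarrow> nat \<Rightarrow> nat \<Rightarrow> complex mat" where
  "blk n k X a b = mat n n (\<lambda>(i,j). X $$ (i*k+a, j*k+b))"

(* (Lambda \<otimes> id_k) applied to X *)
definition ampl :: "nat \<Rightarrow> nat \<Rightarrow> (complex mat \<Rightarrow> complex mat) \<Rightarrow> complex mat \<Rightarrow> complex mat" where
  "ampl n k \<Lambda> X = mat (n*k) (n*k)
     (\<lambda>(p,q). (\<Lambda> (blk n k X (p mod k) (q mod k))) $$ (p div k, q div k))"

definition quantum_channel :: "nat \<Rightarrow> (complex mat \<Rightarrow> complex mat) \<Rightarrow> bool" where
  "quantum_channel n \<Lambda> \<longleftrightarrow>
     (\<forall>A \<in> carrier_mat n n. \<Lambda> A \<in> carrier_mat n n) \<and>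
     (\<forall>A \<in> carrier_mat n n. \<forall>B \<in> carrier_mat n n. \<Lambda> (A + B) = \<Lambda> A + \<Lambda> B) \<and>
     (\<forall>A \<in> carrier_mat n n. \<forall>c. \<Lambda> (c \<cdot>\<^sub>m A) = c \<cdot>\<^sub>m \<Lambda> A) \<and>
     (\<forall>A \<in> carrier_mat n n. mtrace (\<Lambda> A) = mtrace A) \<and>
     (\<forall>k \<ge> 1. \<forall>X. psd (n*k) X \<longrightarrow> psd (n*k) (ampl n k \<Lambda> X))"

definition unitary_channel :: "complex mat \<Rightarrow> complex mat \<Rightarrow> complex mat" where
  "unitary_channel U \<rho> = U * \<rho> * mat_adjoint U"

definition effect :: "nat \<Rightarrow> complex mat \<Rightarrow> bool" where
  "effect n E \<longleftrightarrow> psd n E \<and> psd n (1\<^sub>m n - E)"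

definition Omega :: "nat \<Rightarrow> ('j \<Rightarrow> 'l set) \<Rightarrow> ('j \<Rightarrow> 'l \<Rightarrow> real) \<Rightarrow> ('j \<Rightarrow> 'l \<Rightarrow> complex mat) \<Rightarrow> 'j \<Rightarrow> complex mat" where
  "Omega n L q E j = mat n n (\<lambda>(a,b). \<Sum>l\<in>L j. complex_of_real (q j l) * E j l $$ (a,b))"

definition verification_protocol ::
  "nat \<Rightarrow> complex mat \<Rightarrow> 'j set \<Rightarrow> ('j \<Rightarrow> complex vec) \<Rightarrow> ('j \<Rightarrow> real) \<Rightarrow>
   ('j \<Rightarrow> 'l set) \<Rightarrow> ('j \<Rightarrow> 'l \<Rightarrow> real) \<Rightarrow> ('j \<Rightarrow> 'l \<Rightarrow> complex mat) \<Rightarrow> bool" where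
  "verification_protocol n U J \<psi> p L q E \<longleftrightarrow>
     finite J \<and> (\<forall>j\<in>J. pure_state n (\<psi> j)) \<and>
     (\<forall>j\<in>J. p j > 0) \<and> (\<Sum>j\<in>J. p j) = 1 \<and>
     (\<forall>j\<in>J. finite (L j) \<and> L j \<noteq> {} \<and> (\<Sum>l\<in>L j. q j l) = 1 \<and>
        (\<forall>l\<in>L j. q j l > 0 \<and> effect n (E j l) \<and>
                  E j l *\<^sub>v (U *\<^sub>v \<psi> j) = U *\<^sub>v \<psi> j))"

definition pass_prob :: "nat \<Rightarrow> ('j \<Rightarrow> 'l set) \<Rightarrow> ('j \<Rightarrow> 'l \<Rightarrow> real) \<Rightarrow> ('j \<Rightarrow> 'l \<Rightarrow> complex mat)
    \<Rightarrow> ('j \<Rightarrow> complex vec) \<Rightarrow> (complex mat \<Rightarrow> complex mat) \<Rightarrow> 'j \<Rightarrow> complex" where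
  "pass_prob n L q E \<psi> \<Lambda> j = mtrace (Omega n L q E j * \<Lambda> (proj n (\<psi> j)))"

definition verified_reliably ::
  "nat \<Rightarrow> complex mat \<Rightarrow> 'j set \<Rightarrow> ('j \<Rightarrow> complex vec) \<Rightarrow>
   ('j \<Rightarrow> 'l set) \<Rightarrow> ('j \<Rightarrow> 'l \<Rightarrow> real) \<Rightarrow> ('j \<Rightarrow> 'l \<Rightarrow> complex mat) \<Rightarrow> bool" where
  "verified_reliably n U J \<psi> L q E \<longleftrightarrow>
     (\<forall>j\<in>J. pass_prob n L q E \<psi> (unitary_channel U) j = 1) \<and>
     (\<forall>\<Lambda>. quantum_channel n \<Lambda> \<and> (\<forall>j\<in>J. pass_prob n L q E \<psi> \<Lambda> j = 1) \<longrightarrow>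
        (\<forall>\<rho>. density_op n \<rho> \<longrightarrow> \<Lambda> \<rho> = unitary_channel U \<rho>))"

definition identification_set :: "nat \<Rightarrow> complex mat \<Rightarrow> complex vec set \<Rightarrow> bool" where
  "identification_set n U S \<longleftrightarrow>
     (\<forall>\<psi>\<in>S. pure_state n \<psi>) \<and>
     (\<forall>\<Lambda>. quantum_channel n \<Lambda> \<and>
        (\<forall>\<psi>\<in>S. \<Lambda> (proj n \<psi>) = unitary_channel U (proj n \<psi>)) \<longrightarrow>
        (\<forall>\<rho>. density_op n \<rho> \<longrightarrow> \<Lambda> \<rho> = unitary_channel U \<rho>))"

(* second largest eigenvalue (with multiplicity) of a Hermitian operator;
   convention 0 when dim < 2 (then it is undefined in the paper) *)
definition second_eig :: "complex mat \<Rightarrow> real" where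
  "second_eig A = (if dim_row A < 2 then 0 else
     (THE b. \<exists>es :: real list. char_poly A = prod_list (map (\<lambda>e. [:- complex_of_real e, 1:]) es)
              \<and> sorted_wrt (\<ge>) es \<and> b = es ! 1))"

definition nu :: "nat \<Rightarrow> ('j \<Rightarrow> 'l set) \<Rightarrow> ('j \<Rightarrow> 'l \<Rightarrow> real) \<Rightarrow> ('j \<Rightarrow> 'l \<Rightarrow> complex mat) \<Rightarrow> 'j \<Rightarrow> real" where
  "nu n L q E j = 1 - second_eig (Omega n L q E j)"

definition effective_set ::
  "nat \<Rightarrow> 'j set \<Rightarrow> ('j \<Rightarrow> complex vec) \<Rightarrow> ('j \<Rightarrow> 'l set) \<Rightarrow> ('j \<Rightarrow> 'l \<Rightarrow> real) \<Rightarrow> ('j \<Rightarrow> 'l \<Rightarrow> complex mat) \<Rightarrow> complex vec set" where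
  "effective_set n J \<psi> L q E = \<psi> ` {j\<in>J. nu n L q E j > 0}"

definition ordinary ::
  "nat \<Rightarrow> 'j set \<Rightarrow> ('j \<Rightarrow> 'l set) \<Rightarrow> ('j \<Rightarrow> 'l \<Rightarrow> real) \<Rightarrow> ('j \<Rightarrow> 'l \<Rightarrow> complex mat) \<Rightarrow> bool" where
  "ordinary n J L q E \<longleftrightarrow> (\<forall>j\<in>J. nu n L q E j > 0)"

end

theory Submission
  imports Defs
begin


lemma madj_dims[simp]: "dim_row (mat_adjoint A) = dim_col A" "dim_col (mat_adjoint A) = dim_row A"
  by (auto simp: mat_adjoint_def)

lemma madj_idx[simp]: "(i::nat) < dim_col A \<Longrightarrow> j < dim_row A \<Longrightarrow> mat_adjoint A $$ (i,j) = cnj (A $$ (j,i))"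
  by (simp add: mat_adjoint_def mat_of_rows_def)

lemma madj_carrier[simp]: "A \<in> carrier_mat m n \<Longrightarrow> mat_adjoint A \<in> carrier_mat n m"
  by (metis carrier_matD carrier_matI madj_dims)

lemma mult_idx: "A \<in> carrier_mat n k \<Longrightarrow> B \<in> carrier_mat k m \<Longrightarrow> i < n \<Longrightarrow> j < m \<Longrightarrow>
   (A*B)$$(i,j) = (\<Sum>l<k. A$$(i,l) * B$$(l,j))"
  by (simp add: scalar_prod_def atLeast0LessThan)

lemma mult_vec_idx: "A \<in> carrier_mat n k \<Longrightarrow> v \<in> carrier_vec k \<Longrightarrow> i < n \<Longrightarrow>
   (A *\<^sub>v v)$i = (\<Sum>l<k. A$$(i,l) * v$l)"
  by (simp add: scalar_prod_def atLeast0LessThan)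

lemma sprod_sum: "w \<in> carrier_vec k \<Longrightarrow> v \<bullet> w = (\<Sum>l<k. v$l * w$l)"
  by (simp add: scalar_prod_def atLeast0LessThan)

lemma madj_mult: "A \<in> carrier_mat n k \<Longrightarrow> B \<in> carrier_mat k m \<Longrightarrow>
   mat_adjoint (A*B) = mat_adjoint B * mat_adjoint (A :: complex mat)"
proof (rule eq_matI)
  fix i j assume A: "A \<in> carrier_mat n k" and B: "B \<in> carrier_mat k m" and
   i: "i < dim_row (mat_adjoint B * mat_adjoint A)" and j: "j < dim_col (mat_adjoint B * mat_adjoint A)"
  from i j A B have i: "i < m" and j: "j < n" by auto
  have "mat_adjoint (A*B) $$ (i,j) = cnj ((A*B)$$(j,i))" using A B i j by simp
  also have "\<dots> = cnj (\<Sum>l<k. A$$(j,l)*B$$(l,i))" by (simp add: mult_idx[OF A B j i])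
  also have "\<dots> = (\<Sum>l<k. mat_adjoint B$$(i,l) * mat_adjoint A$$(l,j))"
    using A B i j by (auto simp: mult.commute intro!: sum.cong)
  also have "\<dots> = (mat_adjoint B * mat_adjoint A)$$(i,j)"
    by (rule mult_idx[symmetric], insert A B i j, auto)
  finally show "mat_adjoint (A*B) $$ (i,j) = (mat_adjoint B * mat_adjoint A)$$(i,j)" .
qed (auto)

lemma madj_madj[simp]: "mat_adjoint (mat_adjoint (A :: complex mat)) = A"
  by (rule eq_matI, auto)

lemma madj_one[simp]: "mat_adjoint (1\<^sub>m n :: complex mat) = 1\<^sub>m n"
  by (rule eq_matI, auto)

lemma mult_if0[simp]: "(a::complex) * (if P then x else 0) = (if P then a * x else 0)"
  "(if P then x else 0) * (a::complex) = (if P then x * a else 0)"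
  "cnj (if P then x else 0) = (if P then cnj x else 0)"
  by auto

lemma quad_two:
  fixes A :: "complex mat" and x y :: complex
  assumes A: "A \<in> carrier_mat n n" and i: "i < n" and j: "j < n" and ij: "i \<noteq> j"
  defines "v \<equiv> x \<cdot>\<^sub>v unit_vec n i + y \<cdot>\<^sub>v unit_vec n j"
  shows "conjugate v \<bullet> (A *\<^sub>v v) = cnj x * (x * A$$(i,i) + y * A$$(i,j)) + cnj y * (x * A$$(j,i) + y * A$$(j,j))"
proof -
  have v: "v \<in> carrier_vec n" unfolding v_def by auto
  have vi: "\<And>b. b < n \<Longrightarrow> v $ b = (if b = i then x else 0) + (if b = j then y else 0)"
    unfolding v_def by (auto simp: unit_vec_def)
  have Av: "\<And>a. a < n \<Longrightarrow> (A *\<^sub>v v) $ a = x * A$$(a,i) + y * A$$(a,j)"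
  proof -
    fix a assume a: "a < n"
    have "(A *\<^sub>v v)$a = (\<Sum>l<n. A$$(a,l) * v$l)" by (rule mult_vec_idx[OF A v a])
    also have "\<dots> = (\<Sum>l<n. (if l = i then A$$(a,l) * x else 0) + (if l = j then A$$(a,l) * y else 0))"
      by (rule sum.cong, auto simp: vi distrib_left)
    also have "\<dots> = x * A$$(a,i) + y * A$$(a,j)" using i j by (simp add: sum.distrib mult.commute)
    finally show "(A *\<^sub>v v)$a = x * A$$(a,i) + y * A$$(a,j)" .
  qed
  have "conjugate v \<bullet> (A *\<^sub>v v) = (\<Sum>a<n. cnj (v$a) * (x * A$$(a,i) + y * A$$(a,j)))"
  proof -
    have "conjugate v \<bullet> (A *\<^sub>v v) = (\<Sum>a<n. conjugate v $ a * (A *\<^sub>v v)$a)"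
      by (rule sprod_sum, insert A v, simp)
    also have "\<dots> = (\<Sum>a<n. cnj (v$a) * (x * A$$(a,i) + y * A$$(a,j)))"
      by (rule sum.cong, insert v, auto simp: Av)
    finally show ?thesis .
  qed
  also have "\<dots> = cnj x * (x * A$$(i,i) + y * A$$(i,j)) + cnj y * (x * A$$(j,i) + y * A$$(j,j))"
  proof -
    have "(\<Sum>a<n. cnj (v$a) * (x * A$$(a,i) + y * A$$(a,j))) = (\<Sum>a<n. (if a = i then cnj x * (x * A$$(a,i) + y * A$$(a,j)) else 0) + (if a = j then cnj y * (x * A$$(a,i) + y * A$$(a,j)) else 0))"
      by (rule sum.cong, auto simp: vi distrib_right)
    also have "\<dots> = cnj x * (x * A$$(i,i) + y * A$$(i,j)) + cnj y * (x * A$$(j,i) + y * A$$(j,j))"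
      using i j by (simp add: sum.distrib)
    finally show ?thesis .
  qed
  finally show ?thesis .
qed

lemma psd_herm:
  assumes "psd n A" shows "mat_adjoint A = A"
proof -
  have A: "A \<in> carrier_mat n n" using assms unfolding psd_def by auto
  have q: "\<And>v. v \<in> carrier_vec n \<Longrightarrow> Im (conjugate v \<bullet> (A *\<^sub>v v)) = 0"
    using assms unfolding psd_def by auto
  have e: "A $$ (i,j) = cnj (A $$ (j,i))" if i: "i < n" and j: "j < n" for i j
  proof (cases "i = j")
    case True
    have "conjugate (unit_vec n i) \<bullet> (A *\<^sub>v unit_vec n i) = A $$ (i,i)"
    proof -
      have "conjugate (unit_vec n i) \<bullet> (A *\<^sub>v unit_vec n i) = (\<Sum>a<n. cnj (unit_vec n i $ a) * (A *\<^sub>v unit_vec n i) $ a)"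
        using A by (simp add: sprod_sum[of _ n])
      also have "\<dots> = (\<Sum>a<n. if a = i then (A *\<^sub>v unit_vec n i) $ a else 0)"
        by (rule sum.cong, auto simp: unit_vec_def)
      also have "\<dots> = (A *\<^sub>v unit_vec n i) $ i" using i by simp
      also have "\<dots> = A $$ (i,i)" using A i by simp
      finally show ?thesis .
    qed
    with q[of "unit_vec n i"] i have "Im (A$$(i,i)) = 0" by auto
    then show ?thesis using True by (simp add: complex_eq_iff)
  next
    case False
    have c: "Im (cnj x * (x * A$$(i,i) + y * A$$(i,j)) + cnj y * (x * A$$(j,i) + y * A$$(j,j))) = 0" for x y
      using q[of "x \<cdot>\<^sub>v unit_vec n i + y \<cdot>\<^sub>v unit_vec n j"] quad_two[OF A i j False, of x y] by auto
    have 1: "Im (A$$(i,i)) = 0" using c[of 1 0] by simp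
    have 2: "Im (A$$(j,j)) = 0" using c[of 0 1] by simp
    have 3: "Im (A$$(i,j)) + Im (A$$(j,i)) = 0" using c[of 1 1] 1 2 by simp
    have 4: "Re (A$$(i,j)) - Re (A$$(j,i)) = 0" using c[of 1 \<i>] 1 2 by (simp add: algebra_simps)
    show ?thesis using 3 4 by (simp add: complex_eq_iff)
  qed
  show ?thesis
  proof (rule eq_matI)
    fix i j assume i: "i < dim_row A" and j: "j < dim_col A"
    then have "mat_adjoint A $$ (i,j) = cnj (A $$ (j,i))" using A by simp
    also have "\<dots> = A $$ (i,j)" using e[of i j] i j A by auto
    finally show "mat_adjoint A $$ (i,j) = A $$ (i,j)" .
  qed (use A in auto)
qed



definition dmat :: "nat \<Rightarrow> (nat \<Rightarrow> complex) \<Rightarrow> complex mat" where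
  "dmat n d = mat n n (\<lambda>(i,j). if i = j then d i else 0)"

lemma mult_sq_carrier[simp]: "A \<in> carrier_mat n n \<Longrightarrow> B \<in> carrier_mat n n \<Longrightarrow> A * B \<in> carrier_mat n n"
  by (rule mult_carrier_mat)

lemma dmat_carrier[simp]: "dmat n d \<in> carrier_mat n n"
  by (simp add: dmat_def)

lemma dmat_idx[simp]: "i < n \<Longrightarrow> j < n \<Longrightarrow> dmat n d $$ (i,j) = (if i = j then d i else 0)"
  by (simp add: dmat_def)

lemma WD_idx: assumes W: "W \<in> carrier_mat n n" and i: "i < n" and l: "l < n"
  shows "(W * dmat n d) $$ (i,l) = W$$(i,l) * d l"
proof -
  have "(W * dmat n d) $$ (i,l) = (\<Sum>k<n. W$$(i,k) * dmat n d $$ (k,l))"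
    by (rule mult_idx[OF W dmat_carrier i l])
  also have "\<dots> = (\<Sum>k<n. if k = l then W$$(i,k) * d k else 0)"
    by (rule sum.cong, insert l, auto)
  also have "\<dots> = W$$(i,l) * d l" using l by simp
  finally show ?thesis .
qed

lemma WDW_idx: assumes W: "W \<in> carrier_mat n n" and i: "i < n" and j: "j < n"
  shows "(W * dmat n d * mat_adjoint W) $$ (i,j) = (\<Sum>l<n. W$$(i,l) * d l * cnj (W$$(j,l)))"
proof -
  have WD: "W * dmat n d \<in> carrier_mat n n" using W by simp
  have "(W * dmat n d * mat_adjoint W) $$ (i,j) = (\<Sum>l<n. (W * dmat n d)$$(i,l) * mat_adjoint W $$ (l,j))"
    by (rule mult_idx[OF WD _ i j], insert W, simp)
  also have "\<dots> = (\<Sum>l<n. W$$(i,l) * d l * cnj (W$$(j,l)))"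
    by (rule sum.cong, insert W i j, auto simp: WD_idx)
  finally show ?thesis .
qed

lemma cself: "w \<in> carrier_vec k \<Longrightarrow> (w \<bullet>c w :: complex) = complex_of_real (\<Sum>a<k. (cmod (w$a))^2)"
  by (simp add: sprod_sum[of _ k] flip: complex_norm_square)

lemma madjW_W_idx: assumes W: "W \<in> carrier_mat n n" and i: "i < n" and j: "j < n"
  shows "(mat_adjoint W * W) $$ (i,j) = (\<Sum>a<n. cnj (W$$(a,i)) * W$$(a,j))"
  by (subst mult_idx[of _ n n _ n], insert W i j, auto intro!: sum.cong)

lemma spectral:
  "A \<in> carrier_mat n n \<Longrightarrow> mat_adjoint A = A \<Longrightarrow>
   \<exists>W d. W \<in> carrier_mat n n \<and> mat_adjoint W * W = 1\<^sub>m n \<and> A = W * dmat n d * mat_adjoint W"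
proof (induction n arbitrary: A)
  case 0
  then show ?case
    by (intro exI[of _ "1\<^sub>m 0"] exI[of _ "\<lambda>_. 0"], auto intro!: eq_matI)
next
  case (Suc m)
  define n where "n = Suc m"
  have A: "A \<in> carrier_mat n n" and hA: "mat_adjoint A = A" using Suc.prems n_def by auto
  obtain as where cp: "char_poly A = (\<Prod>a\<leftarrow>as. [:- a, 1:])" and las: "length as = n"
    using char_poly_factorized[OF A] by blast
  then obtain e rest where as: "as = e # rest" unfolding n_def by (cases as, auto)
  have "poly (char_poly A) e = 0" unfolding cp as by simp
  then have ev: "eigenvalue A e" using eigenvalue_root_char_poly[OF A] by simp
  define v where "v = find_eigenvector A e"
  have "eigenvector A v e" unfolding v_def by (rule find_eigenvector[OF A ev])
  then have v: "v \<in> carrier_vec n" and v0: "v \<noteq> 0\<^sub>v n" and Av: "A *\<^sub>v v = e \<cdot>\<^sub>v v"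
    unfolding eigenvector_def using A by auto
  interpret cof_vec_space n "TYPE(complex)" .
  define b where "b = basis_completion v"
  from basis_completion[OF v v0, folded b_def]
  have dist_b: "distinct b" and indep: "\<not> lin_dep (set b)" and bc: "set b \<subseteq> carrier_vec n" and hdb: "hd b = v"
    and len_b: "length b = n" by auto
  define ws where "ws = gram_schmidt n b"
  from gram_schmidt_result[OF bc dist_b indep ws_def]
  have orth: "corthogonal ws" and wsc: "set ws \<subseteq> carrier_vec n" and lws: "length ws = n"
    by (auto simp: len_b)
  from hdb len_b obtain vs where bv: "b = v # vs" unfolding n_def by (cases b, auto)
  have ws0: "ws ! 0 = v" using gram_schmidt_hd[OF v, of vs] lws unfolding ws_def bv n_def
    by (metis hd_conv_nth length_0_conv nat.simps(3))
  have wsi: "ws ! i \<in> carrier_vec n" if "i < n" for i using wsc lws that by auto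
  define s where "s i = (\<Sum>a<n. (cmod ((ws!i)$a))^2)" for i
  have cs: "ws!i \<bullet>c ws!i = complex_of_real (s i)" if "i < n" for i
    unfolding s_def by (rule cself[OF wsi[OF that]])
  have spos: "s i > 0" if i: "i < n" for i
  proof -
    have "ws!i \<bullet>c ws!i \<noteq> 0" using corthogonalD[OF orth, of i i] i lws by auto
    then have "s i \<noteq> 0" using cs[OF i] by auto
    moreover have "s i \<ge> 0" unfolding s_def by (rule sum_nonneg, auto)
    ultimately show ?thesis by auto
  qed
  define c where "c i = complex_of_real (1 / sqrt (s i))" for i
  define W0 where "W0 = mat n n (\<lambda>(a,i). c i * (ws!i)$a)"
  have W0: "W0 \<in> carrier_mat n n" unfolding W0_def by simp
  have W0i: "W0 $$ (a,i) = c i * (ws!i)$a" if "a < n" "i < n" for a i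
    unfolding W0_def using that by simp
  have orthn: "(\<Sum>a<n. cnj (W0$$(a,i)) * W0$$(a,j)) = (if i = j then 1 else 0)" if i: "i < n" and j: "j < n" for i j
  proof -
    have "(\<Sum>a<n. cnj (W0$$(a,i)) * W0$$(a,j)) = c i * c j * (ws!j \<bullet>c ws!i)"
      using wsi[OF i] wsi[OF j]
      by (simp add: W0i i j sprod_sum[of _ n] sum_distrib_left c_def algebra_simps)
    also have "\<dots> = (if i = j then 1 else 0)"
    proof (cases "i = j")
      case True
      have "c i * c i * complex_of_real (s i) = 1" using spos[OF i]
        by (simp add: c_def field_simps flip: of_real_mult)
      then show ?thesis using True cs[OF i] by simp
    next
      case False
      then show ?thesis using corthogonalD[OF orth, of j i] i j lws by auto
    qed
    finally show ?thesis .
  qed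
  have W0u: "mat_adjoint W0 * W0 = 1\<^sub>m n"
    by (rule eq_matI, insert W0, auto simp del: index_mult_mat simp add: madjW_W_idx orthn index_mult_mat(2,3))
  have W0u': "W0 * mat_adjoint W0 = 1\<^sub>m n"
    by (rule mat_mult_left_right_inverse[OF _ W0 W0u], insert W0, simp)
  have n0: "0 < n" unfolding n_def by simp
  have mW0: "mat_adjoint W0 \<in> carrier_mat n n" using W0 by simp
  have W0col: "W0 $$ (b,0) = c 0 * v$b" if "b < n" for b using W0i[OF that n0] ws0 by simp
  have AW0: "(A * W0) $$ (a,0) = e * W0 $$ (a,0)" if a: "a < n" for a
  proof -
    have "(A * W0) $$ (a,0) = (\<Sum>b<n. A$$(a,b) * W0$$(b,0))" by (rule mult_idx[OF A W0 a n0])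
    also have "\<dots> = c 0 * (\<Sum>b<n. A$$(a,b) * v$b)"
      by (simp add: sum_distrib_left W0col algebra_simps)
    also have "(\<Sum>b<n. A$$(a,b) * v$b) = (A *\<^sub>v v) $ a" by (rule mult_vec_idx[OF A v a, symmetric])
    also have "\<dots> = e * v $ a" using Av a v by simp
    finally show ?thesis using W0col[OF a] by simp
  qed
  define A' where "A' = mat_adjoint W0 * A * W0"
  have A': "A' \<in> carrier_mat n n" unfolding A'_def using W0 A mW0 by (simp add: assoc_mult_mat[of _ n n _ n _ n])
  have A'col: "A' $$ (i,0) = (if i = 0 then e else 0)" if i: "i < n" for i
  proof -
    have "A' = mat_adjoint W0 * (A * W0)" unfolding A'_def using W0 A mW0 by (simp add: assoc_mult_mat[of _ n n _ n _ n])
    then have "A' $$ (i,0) = (\<Sum>a<n. mat_adjoint W0 $$ (i,a) * (A * W0)$$(a,0))"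
      using mult_idx[of "mat_adjoint W0" n n "A * W0" n i 0] W0 A i n0 by simp
    also have "\<dots> = e * (\<Sum>a<n. cnj (W0$$(a,i)) * W0$$(a,0))"
      unfolding sum_distrib_left by (rule sum.cong, insert W0 i, auto simp: AW0 algebra_simps)
    also have "\<dots> = (if i = 0 then e else 0)" using orthn[OF i n0] by simp
    finally show ?thesis .
  qed
  have hA': "mat_adjoint A' = A'"
  proof -
    have "mat_adjoint A' = mat_adjoint W0 * mat_adjoint (mat_adjoint W0 * A)"
      unfolding A'_def by (rule madj_mult, insert W0 A, auto)
    also have "mat_adjoint (mat_adjoint W0 * A) = mat_adjoint A * W0"
      by (subst madj_mult[of _ n n _ n], insert W0 A, auto)
    finally show ?thesis using hA W0 A unfolding A'_def by (simp add: assoc_mult_mat[of _ n n _ n _ n])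
  qed
  have A'row: "A' $$ (0,j) = (if j = 0 then cnj e else 0)" if j: "j < n" for j
  proof -
    have "A' $$ (0,j) = mat_adjoint A' $$ (0,j)" using hA' by simp
    also have "\<dots> = cnj (A' $$ (j,0))" using A' j n0 by simp
    finally show ?thesis using A'col[OF j] by simp
  qed
  have ereal: "cnj e = e" using A'row[OF n0] A'col[OF n0] by simp
  define A3 where "A3 = mat m m (\<lambda>(i,j). A' $$ (Suc i, Suc j))"
  have A3: "A3 \<in> carrier_mat m m" unfolding A3_def by simp
  have hA3: "mat_adjoint A3 = A3"
  proof (rule eq_matI)
    fix i j assume "i < dim_row A3" "j < dim_col A3"
    then have i: "i < m" and j: "j < m" using A3 by auto
    have "mat_adjoint A3 $$ (i,j) = cnj (A' $$ (Suc j, Suc i))" using i j unfolding A3_def by simp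
    also have "\<dots> = mat_adjoint A' $$ (Suc i, Suc j)" using A' i j unfolding n_def by simp
    also have "\<dots> = A3 $$ (i,j)" using hA' i j unfolding A3_def by simp
    finally show "mat_adjoint A3 $$ (i,j) = A3 $$ (i,j)" .
  qed (use A3 in auto)
  obtain V d3 where V: "V \<in> carrier_mat m m" and Vu: "mat_adjoint V * V = 1\<^sub>m m"
    and A3eq: "A3 = V * dmat m d3 * mat_adjoint V"
    using Suc.IH[OF A3 hA3] by blast
  define W1 where "W1 = mat n n (\<lambda>(a,i). if a = 0 \<and> i = 0 then 1 else if a = 0 \<or> i = 0 then 0 else V $$ (a-1,i-1))"
  define d where "d i = (if i = 0 then e else d3 (i-1))" for i
  have W1: "W1 \<in> carrier_mat n n" unfolding W1_def by simp
  have W100: "W1 $$ (0,0) = 1" using n0 unfolding W1_def by simp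
  have W10S: "W1 $$ (0,Suc j) = 0" if "j < m" for j using that unfolding W1_def n_def by simp
  have W1S0: "W1 $$ (Suc a,0) = 0" if "a < m" for a using that unfolding W1_def n_def by simp
  have W1SS: "W1 $$ (Suc a,Suc j) = V $$ (a,j)" if "a < m" "j < m" for a j using that unfolding W1_def n_def by simp
  have VV: "(\<Sum>a<m. cnj (V$$(a,i)) * V$$(a,j)) = (if i = j then 1 else 0)" if "i < m" "j < m" for i j
    using madjW_W_idx[OF V that] Vu that by simp
  have W1u: "mat_adjoint W1 * W1 = 1\<^sub>m n"
  proof (rule eq_matI)
    fix i j assume "i < dim_row (1\<^sub>m n :: complex mat)" "j < dim_col (1\<^sub>m n :: complex mat)"
    then have i: "i < n" and j: "j < n" by auto
    have "(mat_adjoint W1 * W1) $$ (i,j) = (\<Sum>a<Suc m. cnj (W1$$(a,i)) * W1$$(a,j))"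
      using madjW_W_idx[OF W1 i j] unfolding n_def .
    also have "\<dots> = cnj (W1$$(0,i)) * W1$$(0,j) + (\<Sum>a<m. cnj (W1$$(Suc a,i)) * W1$$(Suc a,j))"
      by (rule sum.lessThan_Suc_shift)
    also have "\<dots> = (1\<^sub>m n :: complex mat) $$ (i,j)"
    proof (cases i)
      case 0
      then show ?thesis
      proof (cases j)
        case 0 then show ?thesis using `i = 0` W100 W1S0 n0 by simp
      next
        case (Suc j') then show ?thesis using `i = 0` W100 W10S W1S0 j unfolding n_def by simp
      qed
    next
      case (Suc i')
      then show ?thesis
      proof (cases j)
        case 0 then show ?thesis using `i = Suc i'` W100 W10S W1S0 i unfolding n_def by simp
      next
        case (Suc j') then show ?thesis using `i = Suc i'` W10S W1SS VV[of i' j'] i j unfolding n_def by simp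
      qed
    qed
    finally show "(mat_adjoint W1 * W1) $$ (i,j) = (1\<^sub>m n :: complex mat) $$ (i,j)" .
  qed (use W1 in auto)
  have A3i: "A' $$ (Suc i, Suc j) = (\<Sum>l<m. V$$(i,l) * d3 l * cnj (V$$(j,l)))" if "i < m" "j < m" for i j
  proof -
    have "A' $$ (Suc i, Suc j) = A3 $$ (i,j)" using that unfolding A3_def by simp
    also have "\<dots> = (\<Sum>l<m. V$$(i,l) * d3 l * cnj (V$$(j,l)))" unfolding A3eq by (rule WDW_idx[OF V that])
    finally show ?thesis .
  qed
  have A'eq: "A' = W1 * dmat n d * mat_adjoint W1"
  proof (rule eq_matI)
    fix i j assume "i < dim_row (W1 * dmat n d * mat_adjoint W1)" "j < dim_col (W1 * dmat n d * mat_adjoint W1)"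
    then have i: "i < n" and j: "j < n" using W1 by auto
    have "(W1 * dmat n d * mat_adjoint W1) $$ (i,j) = (\<Sum>l<Suc m. W1$$(i,l) * d l * cnj (W1$$(j,l)))"
      using WDW_idx[OF W1 i j] unfolding n_def .
    also have "\<dots> = W1$$(i,0) * d 0 * cnj (W1$$(j,0)) + (\<Sum>l<m. W1$$(i,Suc l) * d (Suc l) * cnj (W1$$(j,Suc l)))"
      by (rule sum.lessThan_Suc_shift)
    also have "\<dots> = A' $$ (i,j)"
    proof (cases i)
      case 0
      then show ?thesis
      proof (cases j)
        case 0 then show ?thesis using `i = 0` W100 W10S A'col[OF n0] d_def by simp
      next
        case (Suc j') then show ?thesis using `i = 0` W100 W10S W1S0 j A'row[OF j] unfolding n_def by simp
      qed
    next
      case (Suc i')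
      then show ?thesis
      proof (cases j)
        case 0 then show ?thesis using `i = Suc i'` W100 W10S W1S0 i A'col[OF i] unfolding n_def by simp
      next
        case (Suc j')
        have i': "i' < m" and j': "j' < m" using i j `i = Suc i'` Suc unfolding n_def by auto
        have "(\<Sum>l<m. W1$$(Suc i',Suc l) * d (Suc l) * cnj (W1$$(Suc j',Suc l))) = (\<Sum>l<m. V$$(i',l) * d3 l * cnj (V$$(j',l)))"
          by (rule sum.cong, insert i' j', auto simp: W1SS d_def)
        then show ?thesis using `i = Suc i'` Suc W1S0 A3i[OF i' j'] i' j' by simp
      qed
    qed
    finally show "A' $$ (i,j) = (W1 * dmat n d * mat_adjoint W1) $$ (i,j)" by simp
  qed (use W1 A' in auto)
  define W where "W = W0 * W1"
  have W: "W \<in> carrier_mat n n" unfolding W_def using W0 W1 mW0 by simp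
  have mW: "mat_adjoint W = mat_adjoint W1 * mat_adjoint W0" unfolding W_def by (rule madj_mult[OF W0 W1])
  have Wu: "mat_adjoint W * W = 1\<^sub>m n"
  proof -
    have "mat_adjoint W * W = mat_adjoint W1 * (mat_adjoint W0 * W0) * W1"
      using madj_mult[OF W0 W1] unfolding W_def using W0 W1 mW0 madj_carrier[OF W1] by (simp add: assoc_mult_mat[of _ n n _ n _ n])
    also have "\<dots> = 1\<^sub>m n" using W0u W1u W1 by simp
    finally show ?thesis .
  qed
  have mW1: "mat_adjoint W1 \<in> carrier_mat n n" using W1 by simp
  have "A = (W0 * mat_adjoint W0) * A * (W0 * mat_adjoint W0)" using W0u' A by simp
  also have "\<dots> = W0 * A' * mat_adjoint W0" unfolding A'_def using W0 A mW0 by (simp add: assoc_mult_mat[of _ n n _ n _ n])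
  also have "\<dots> = W * dmat n d * mat_adjoint W" using madj_mult[OF W0 W1] unfolding A'eq W_def using W0 W1 mW0 mW1 by (simp add: assoc_mult_mat[of _ n n _ n _ n])
  finally have "A = W * dmat n d * mat_adjoint W" .
  with W Wu show ?case unfolding n_def by blast
qed



lemma mtrace_sum: "M \<in> carrier_mat n n \<Longrightarrow> mtrace M = (\<Sum>i<n. M $$ (i,i))"
  unfolding mtrace_def by simp

lemma mtrace_mult: fixes A :: "complex mat" assumes A: "A \<in> carrier_mat n k" and B: "B \<in> carrier_mat k n"
  shows "mtrace (A * B) = (\<Sum>i<n. \<Sum>l<k. A$$(i,l) * B$$(l,i))"
  unfolding mtrace_sum[OF mult_carrier_mat[OF A B]] by (rule sum.cong, simp_all add: mult_idx[OF A B])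

lemma mtrace_comm: fixes A :: "complex mat" assumes A: "A \<in> carrier_mat n k" and B: "B \<in> carrier_mat k n"
  shows "mtrace (A * B) = mtrace (B * A)"
proof -
  have "mtrace (A * B) = (\<Sum>i<n. \<Sum>l<k. A$$(i,l) * B$$(l,i))"
    by (rule mtrace_mult[OF A B])
  also have "\<dots> = (\<Sum>l<k. \<Sum>i<n. B$$(l,i) * A$$(i,l))"
    by (subst sum.swap, simp add: mult.commute)
  also have "\<dots> = mtrace (B * A)"
    by (rule mtrace_mult[OF B A, symmetric])
  finally show ?thesis .
qed

lemma adj_move: fixes X :: "complex mat" assumes X: "X \<in> carrier_mat n k" and x: "x \<in> carrier_vec k" and y: "y \<in> carrier_vec n"
  shows "conjugate (X *\<^sub>v x) \<bullet> y = conjugate x \<bullet> (mat_adjoint X *\<^sub>v y)"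
proof -
  have "conjugate (X *\<^sub>v x) \<bullet> y = (\<Sum>a<n. conjugate (X *\<^sub>v x) $ a * y$a)"
    by (rule sprod_sum[OF y])
  also have "\<dots> = (\<Sum>a<n. cnj (\<Sum>i<k. X$$(a,i) * x$i) * y$a)"
    by (rule sum.cong, insert X x, auto simp del: index_mult_mat_vec simp: mult_vec_idx[OF X x])
  also have "\<dots> = (\<Sum>i<k. cnj (x$i) * (\<Sum>a<n. cnj (X$$(a,i)) * y$a))"
    by (simp add: cnj_sum sum_distrib_left sum_distrib_right algebra_simps, subst sum.swap, simp)
  also have "\<dots> = conjugate x \<bullet> (mat_adjoint X *\<^sub>v y)"
  proof -
    have mX: "mat_adjoint X \<in> carrier_mat k n" using X by simp
    have "mat_adjoint X *\<^sub>v y \<in> carrier_vec k" using mX y by simp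
    then have "conjugate x \<bullet> (mat_adjoint X *\<^sub>v y) = (\<Sum>i<k. conjugate x $ i * (mat_adjoint X *\<^sub>v y) $ i)"
      by (rule sprod_sum)
    also have "\<dots> = (\<Sum>i<k. cnj (x$i) * (\<Sum>a<n. cnj (X$$(a,i)) * y$a))"
      by (rule sum.cong, insert x X y, auto simp del: index_mult_mat_vec simp: mult_vec_idx[OF mX y] intro!: sum.cong)
    finally show ?thesis by simp
  qed
  finally show ?thesis .
qed

lemma psd_carrier: "psd n A \<Longrightarrow> A \<in> carrier_mat n n" unfolding psd_def by auto

lemma psd_conj: assumes P: "psd n M" and W: "W \<in> carrier_mat n n"
  shows "psd n (mat_adjoint W * M * W)"
proof -
  have M: "M \<in> carrier_mat n n" using P psd_carrier by auto
  have mW: "mat_adjoint W \<in> carrier_mat n n" using W by simp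
  have "conjugate x \<bullet> ((mat_adjoint W * M * W) *\<^sub>v x) = conjugate (W *\<^sub>v x) \<bullet> (M *\<^sub>v (W *\<^sub>v x))"
    if x: "x \<in> carrier_vec n" for x
  proof -
    have "(mat_adjoint W * M * W) *\<^sub>v x = mat_adjoint W *\<^sub>v (M *\<^sub>v (W *\<^sub>v x))"
      using mW M W x by (simp add: assoc_mult_mat_vec[of _ n n _ n])
    then show ?thesis using adj_move[OF W x, of "M *\<^sub>v (W *\<^sub>v x)"] M W x by simp
  qed
  note eq = this
  have carr: "mat_adjoint W * M * W \<in> carrier_mat n n" using mW M W by simp
  show ?thesis unfolding psd_def
  proof (intro conjI ballI carr)
    fix v :: "complex vec" assume v: "v \<in> carrier_vec n"
    have Wv: "W *\<^sub>v v \<in> carrier_vec n" using W v by simp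
    show "Im (conjugate v \<bullet> ((mat_adjoint W * M * W) *\<^sub>v v)) = 0"
      unfolding eq[OF v] using P Wv unfolding psd_def by blast
    show "0 \<le> Re (conjugate v \<bullet> ((mat_adjoint W * M * W) *\<^sub>v v))"
      unfolding eq[OF v] using P Wv unfolding psd_def by blast
  qed
qed

lemma psd_diag: assumes P: "psd n M" and i: "i < n"
  shows "Im (M $$ (i,i)) = 0" "Re (M $$ (i,i)) \<ge> 0"
proof -
  have M: "M \<in> carrier_mat n n" using P psd_carrier by auto
  have "conjugate (unit_vec n i) \<bullet> (M *\<^sub>v unit_vec n i) = M $$ (i,i)"
  proof -
    have "conjugate (unit_vec n i) \<bullet> (M *\<^sub>v unit_vec n i) = (\<Sum>a<n. cnj (unit_vec n i $ a) * (M *\<^sub>v unit_vec n i) $ a)"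
      using M by (simp add: sprod_sum[of _ n])
    also have "\<dots> = (\<Sum>a<n. if a = i then (M *\<^sub>v unit_vec n i) $ a else 0)"
      by (rule sum.cong, auto simp: unit_vec_def)
    also have "\<dots> = M $$ (i,i)" using M i by simp
    finally show ?thesis .
  qed
  with P show "Im (M $$ (i,i)) = 0" "Re (M $$ (i,i)) \<ge> 0" unfolding psd_def by (metis unit_vec_carrier)+
qed

lemma psd_offdiag: assumes P: "psd n M" and i: "i < n" and j: "j < n" and z: "M $$ (i,i) = 0"
  shows "M $$ (j,i) = 0"
proof (cases "i = j")
  case True then show ?thesis using z by simp
next
  case False
  have M: "M \<in> carrier_mat n n" using P psd_carrier by auto
  have h: "M $$ (i,j) = cnj (M $$ (j,i))"
    using psd_herm[OF P] M i j by (metis madj_idx carrier_matD)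
  define zz where "zz = M $$ (j,i)"
  define s where "s = M $$ (j,j)"
  have q: "Re (cnj x * (x * M$$(i,i) + y * M$$(i,j)) + cnj y * (x * M$$(j,i) + y * M$$(j,j))) \<ge> 0" for x y
    using P quad_two[OF M i j False, of x y] unfolding psd_def
    by (metis add.commute smult_carrier_vec unit_vec_carrier add_carrier_vec)
  show ?thesis
  proof (rule ccontr)
    assume nz: "M $$ (j,i) \<noteq> 0"
    define t where "t = (Re s + 1) / (2 * (cmod zz)^2)"
    have cz: "cmod zz > 0" using nz zz_def by simp
    have cm: "(cmod zz)^2 = Re zz * Re zz + Im zz * Im zz" using cmod_power2[of zz] by (simp add: power2_eq_square)
    have "Re (cnj (- (of_real t * cnj zz)) * (- (of_real t * cnj zz) * 0 + 1 * cnj zz) + cnj 1 * (- (of_real t * cnj zz) * zz + 1 * s)) \<ge> 0"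
      using q[of "- (of_real t * cnj zz)" 1] z h unfolding zz_def s_def by simp
    moreover have "Re (cnj (- (of_real t * cnj zz)) * (- (of_real t * cnj zz) * 0 + 1 * cnj zz) + cnj 1 * (- (of_real t * cnj zz) * zz + 1 * s))
       = Re s - 2 * t * (Re zz * Re zz + Im zz * Im zz)"
      by (simp add: algebra_simps)
    moreover have "2 * t * (Re zz * Re zz + Im zz * Im zz) = Re s + 1" unfolding t_def cm[symmetric] using cz by (simp add: field_simps)
    ultimately show False by simp
  qed
qed

lemma proj_idx[simp]: "a < n \<Longrightarrow> b < n \<Longrightarrow> proj n \<psi> $$ (a,b) = \<psi> $ a * cnj (\<psi> $ b)"
  by (simp add: proj_def)

lemma proj_carrier[simp]: "proj n \<psi> \<in> carrier_mat n n"
  by (simp add: proj_def)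

lemma proj_dims[simp]: "dim_row (proj n \<psi>) = n" "dim_col (proj n \<psi>) = n"
  by (simp_all add: proj_def)

lemma proj_mult_vec: assumes psi: "\<psi> \<in> carrier_vec n" and x: "x \<in> carrier_vec n"
  shows "proj n \<psi> *\<^sub>v x = (conjugate \<psi> \<bullet> x) \<cdot>\<^sub>v \<psi>"
proof (rule eq_vecI)
  fix a assume "a < dim_vec ((conjugate \<psi> \<bullet> x) \<cdot>\<^sub>v \<psi>)"
  then have a: "a < n" using psi by simp
  have "(proj n \<psi> *\<^sub>v x) $ a = (\<Sum>b<n. \<psi>$a * cnj (\<psi>$b) * x$b)"
    using a by (simp add: mult_vec_idx[OF proj_carrier x a])
  also have "\<dots> = (conjugate \<psi> \<bullet> x) * \<psi>$a"
    using psi x by (simp add: sprod_sum[OF x] sum_distrib_left sum_distrib_right algebra_simps)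
  finally show "(proj n \<psi> *\<^sub>v x) $ a = ((conjugate \<psi> \<bullet> x) \<cdot>\<^sub>v \<psi>) $ a" using a psi by simp
qed (use psi in simp)

lemma psd_proj: assumes psi: "\<psi> \<in> carrier_vec n" shows "psd n (proj n \<psi>)"
proof -
  have "conjugate x \<bullet> (proj n \<psi> *\<^sub>v x) = cnj (conjugate \<psi> \<bullet> x) * (conjugate \<psi> \<bullet> x)"
    if x: "x \<in> carrier_vec n" for x
  proof -
    have "conjugate x \<bullet> (proj n \<psi> *\<^sub>v x) = (conjugate \<psi> \<bullet> x) * (conjugate x \<bullet> \<psi>)"
      using psi x by (simp add: proj_mult_vec)
    moreover have "conjugate x \<bullet> \<psi> = cnj (conjugate \<psi> \<bullet> x)"
      using psi x by (simp add: sprod_sum[OF x] sprod_sum[OF psi] cnj_sum mult.commute)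
    ultimately show ?thesis by simp
  qed
  then show ?thesis unfolding psd_def using psi
    by (auto simp: complex_mult_cnj[of "cnj _", simplified])
qed

lemma mtrace_proj: assumes psi: "\<psi> \<in> carrier_vec n" and M: "M \<in> carrier_mat n n"
  shows "mtrace (M * proj n \<psi>) = conjugate \<psi> \<bullet> (M *\<^sub>v \<psi>)"
proof -
  have "mtrace (M * proj n \<psi>) = (\<Sum>i<n. \<Sum>l<n. M$$(i,l) * proj n \<psi> $$ (l,i))"
    by (rule mtrace_mult[OF M proj_carrier])
  also have "\<dots> = (\<Sum>i<n. \<Sum>l<n. M$$(i,l) * (\<psi>$l * cnj (\<psi>$i)))" by simp
  also have "\<dots> = (\<Sum>i<n. cnj (\<psi>$i) * (\<Sum>l<n. M$$(i,l) * \<psi>$l))"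
    by (simp add: sum_distrib_left algebra_simps)
  also have "\<dots> = conjugate \<psi> \<bullet> (M *\<^sub>v \<psi>)"
    using M psi by (simp add: sprod_sum[of _ n] mult_vec_idx[OF M psi])
  finally show ?thesis .
qed

lemma proj_unitary: assumes A: "A \<in> carrier_mat n n" and psi: "\<psi> \<in> carrier_vec n"
  shows "A * proj n \<psi> * mat_adjoint A = proj n (A *\<^sub>v \<psi>)"
proof (rule eq_matI)
  fix a b assume "a < dim_row (proj n (A *\<^sub>v \<psi>))" "b < dim_col (proj n (A *\<^sub>v \<psi>))"
  then have a: "a < n" and b: "b < n" by auto
  have AP: "A * proj n \<psi> \<in> carrier_mat n n" using A by simp
  have mA: "mat_adjoint A \<in> carrier_mat n n" using A by simp
  have "(A * proj n \<psi> * mat_adjoint A) $$ (a,b) = (\<Sum>l<n. (A * proj n \<psi>)$$(a,l) * mat_adjoint A $$ (l,b))"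
    by (rule mult_idx[OF AP mA a b])
  also have "\<dots> = (\<Sum>l<n. (\<Sum>k<n. A$$(a,k) * (\<psi>$k * cnj (\<psi>$l))) * cnj (A$$(b,l)))"
    by (rule sum.cong, insert A a b, auto simp: mult_idx[OF A proj_carrier a] simp del: index_mult_mat)
  also have "\<dots> = (\<Sum>k<n. A$$(a,k) * \<psi>$k) * cnj (\<Sum>l<n. A$$(b,l) * \<psi>$l)"
    by (simp add: cnj_sum sum_distrib_left sum_distrib_right algebra_simps)
  also have "\<dots> = proj n (A *\<^sub>v \<psi>) $$ (a,b)"
    using a b A psi by (simp add: mult_vec_idx[OF A psi] del: index_mult_mat_vec)
  finally show "(A * proj n \<psi> * mat_adjoint A) $$ (a,b) = proj n (A *\<^sub>v \<psi>) $$ (a,b)" .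
qed (use A in auto)



lemma order_lin: "order (a::complex) [:-x,1:] = (if a = x then 1 else 0)"
proof (cases "a = x")
  case True then show ?thesis using order_power_n_n[of a 1] by simp
next
  case False then show ?thesis by (intro order_0I[THEN trans]) auto
qed

lemma lin_prod_nz: "(\<Prod>x\<leftarrow>xs. [:-x,1:]) \<noteq> (0::complex poly)"
proof -
  have "monic (\<Prod>x\<leftarrow>xs. [:-x,1:] :: complex poly)" by (rule monic_prod_list, auto)
  then show ?thesis by auto
qed

lemma count_of_real: "count (mset (map complex_of_real es)) (complex_of_real x) = count (mset es) x"
  by (induct es) auto

lemma order_lin_prod: "order a (\<Prod>x\<leftarrow>xs. [:-x,1:]) = count (mset xs) (a::complex)"
proof (induct xs)
  case Nil then show ?case by (simp add: order_0I)
next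
  case (Cons x xs)
  have nz: "[:-x,1:] * (\<Prod>x\<leftarrow>xs. [:-x,1:]) \<noteq> 0" using lin_prod_nz[of "x#xs"] by simp
  have "order a (\<Prod>x\<leftarrow>x#xs. [:-x,1:]) = order a ([:-x,1:] * (\<Prod>x\<leftarrow>xs. [:-x,1:]))"
    by (simp only: list.map prod_list.Cons)
  also have "\<dots> = order a [:-x,1:] + order a (\<Prod>x\<leftarrow>xs. [:-x,1:])" by (rule order_mult[OF nz])
  finally have "order a (\<Prod>x\<leftarrow>x#xs. [:-x,1:]) = order a [:-x,1:] + order a (\<Prod>x\<leftarrow>xs. [:-x,1:])" .
  then show ?case using Cons by (simp add: order_lin)
qed

lemma count_map_card: "count (mset (map d [0..<n])) x = card {i. i < n \<and> d i = x}"
proof -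
  have "count (mset (map d [0..<n])) x = length (filter ((=) x) (map d [0..<n]))"
    by (simp only: count_mset count_list_eq_length_filter)
  also have "\<dots> = card {i. i < n \<and> d i = x}"
    by (subst length_filter_conv_card, auto intro!: arg_cong[where f = card])
  finally show ?thesis .
qed

lemma char_poly_dmat: "char_poly (dmat n d) = (\<Prod>x\<leftarrow>map d [0..<n]. [:-x,1:])"
proof -
  have ut: "upper_triangular (dmat n d)" unfolding upper_triangular_def by (simp add: dmat_def)
  have "diag_mat (dmat n d) = map d [0..<n]" unfolding diag_mat_def by (simp add: dmat_def)
  then show ?thesis using char_poly_upper_triangular[OF dmat_carrier ut] by simp
qed

lemma prod_perm: fixes f :: "'a \<Rightarrow> 'b :: comm_monoid_mult" assumes "mset xs = mset ys"
  shows "prod_list (map f xs) = prod_list (map f ys)"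
proof -
  have "prod_list (map f xs) = prod_mset (mset (map f xs))" by (rule prod_mset_prod_list[symmetric])
  also have "\<dots> = prod_mset (image_mset f (mset xs))" by simp
  also have "\<dots> = prod_mset (image_mset f (mset ys))" using assms by simp
  also have "\<dots> = prod_mset (mset (map f ys))" by simp
  also have "\<dots> = prod_list (map f ys)" by (rule prod_mset_prod_list)
  finally show ?thesis .
qed

lemma second_eig_one:
  assumes Om: "Om \<in> carrier_mat n n" and n2: "n \<ge> 2"
  and W: "W \<in> carrier_mat n n" and Wu: "mat_adjoint W * W = 1\<^sub>m n" and Wu': "W * mat_adjoint W = 1\<^sub>m n"
  and eq: "Om = W * dmat n d * mat_adjoint W"
  and dreal: "\<And>i. i < n \<Longrightarrow> d i = complex_of_real (Re (d i)) \<and> Re (d i) \<le> 1"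
  and K: "card {i. i < n \<and> d i = 1} \<ge> 2"
  shows "second_eig Om = 1"
proof -
  have "similar_mat_wit Om (dmat n d) W (mat_adjoint W)"
    by (rule similar_mat_witI[OF Wu' Wu eq Om dmat_carrier W], insert W, simp)
  then have "similar_mat Om (dmat n d)" unfolding similar_mat_def by blast
  then have cp: "char_poly Om = (\<Prod>x\<leftarrow>map d [0..<n]. [:-x,1:])"
    using char_poly_similar char_poly_dmat by metis
  have P: "es ! 1 = 1" if es: "char_poly Om = (\<Prod>e\<leftarrow>es. [:-complex_of_real e,1:])" and so: "sorted_wrt (\<ge>) es" for es
  proof -
    have es': "char_poly Om = (\<Prod>x\<leftarrow>map complex_of_real es. [:-x,1:])" using es by (simp add: o_def)
    have cnt: "count (mset (map complex_of_real es)) x = card {i. i < n \<and> d i = x}" for x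
      using order_lin_prod[of x "map complex_of_real es"] order_lin_prod[of x "map d [0..<n]"] es' cp count_map_card
      by metis
    have c1: "count (mset es) 1 \<ge> 2"
      using cnt[of 1] K count_of_real[of es 1] by simp
    have le1: "e \<le> 1" if e: "e \<in> set es" for e
    proof -
      have "count (mset es) e > 0" using e by (rule count_mset_gt_0)
      then have "card {i. i < n \<and> d i = complex_of_real e} > 0" using cnt[of "complex_of_real e"] count_of_real[of es e] by simp
      then obtain i where i: "i < n" "d i = complex_of_real e"
        by (metis (mono_tags, lifting) card.empty empty_Collect_eq less_irrefl)
      then show ?thesis using dreal[OF i(1)] by auto
    qed
    have "count (mset es) 1 \<le> length es" by (induct es, auto)
    then have "length es \<ge> 2" using c1 by linarith
    then obtain a b rest where abr: "es = a # b # rest" by (cases es; cases "tl es", auto)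
    have b1: "b \<le> 1" using le1 abr by simp
    show ?thesis
    proof (rule ccontr)
      assume "es ! 1 \<noteq> 1"
      then have "b < 1" using b1 abr by simp
      moreover have "\<forall>x\<in>set rest. x \<le> b" using so abr by simp
      ultimately have "count (mset rest) 1 = 0" by fastforce
      then have "count (mset es) 1 \<le> 1" using abr \<open>b < 1\<close> by (simp del: count_mset_0_iff)
      then show False using c1 by simp
    qed
  qed
  define L where "L = map (\<lambda>i. Re (d i)) [0..<n]"
  define es0 where "es0 = rev (sort L)"
  have so0: "sorted_wrt (\<ge>) es0" unfolding es0_def by (simp add: sorted_wrt_rev)
  have cp0: "char_poly Om = (\<Prod>e\<leftarrow>es0. [:-complex_of_real e,1:])"
  proof -
    have "(\<Prod>e\<leftarrow>es0. [:-complex_of_real e,1:]) = (\<Prod>e\<leftarrow>L. [:-complex_of_real e,1:])"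
      by (rule prod_perm, simp add: es0_def)
    also have "\<dots> = (\<Prod>x\<leftarrow>map d [0..<n]. [:-x,1:])"
      unfolding L_def by (simp add: o_def, rule arg_cong[where f = prod_list], rule map_cong, insert dreal, auto)
    finally show ?thesis using cp by simp
  qed
  have dimO: "dim_row Om = n" using Om by simp
  have ex: "\<exists>es :: real list. char_poly Om = prod_list (map (\<lambda>e. [:- complex_of_real e, 1:]) es) \<and> sorted_wrt (\<ge>) es \<and> 1 = es ! 1"
    using P[OF cp0 so0] cp0 so0 by (intro exI[of _ es0], simp)
  have "(THE b. \<exists>es :: real list. char_poly Om = prod_list (map (\<lambda>e. [:- complex_of_real e, 1:]) es) \<and> sorted_wrt (\<ge>) es \<and> b = es ! 1) = 1"
  proof (rule the_equality, rule ex)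
    fix b assume "\<exists>es :: real list. char_poly Om = prod_list (map (\<lambda>e. [:- complex_of_real e, 1:]) es) \<and> sorted_wrt (\<ge>) es \<and> b = es ! 1"
    then obtain es :: "real list" where h: "char_poly Om = prod_list (map (\<lambda>e. [:- complex_of_real e, 1:]) es)" "sorted_wrt (\<ge>) es" "b = es ! 1"
      by blast
    show "b = 1" using P[OF h(1) h(2)] h(3) by simp
  qed
  then show ?thesis unfolding second_eig_def using n2 dimO by simp
qed



lemma dmat_dims[simp]: "dim_row (dmat n d) = n" "dim_col (dmat n d) = n"
  by (simp_all add: dmat_def)


lemma mtrace_conj: fixes X W :: "complex mat"
  assumes X: "X \<in> carrier_mat n n" and W: "W \<in> carrier_mat n n" and Wu': "W * mat_adjoint W = 1\<^sub>m n"
  shows "mtrace (mat_adjoint W * X * W) = mtrace X"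
proof -
  have mW: "mat_adjoint W \<in> carrier_mat n n" using W by simp
  have "mtrace (mat_adjoint W * X * W) = mtrace (mat_adjoint W * (X * W))"
    using mW X W by (simp add: assoc_mult_mat[of _ n n _ n _ n])
  also have "\<dots> = mtrace ((X * W) * mat_adjoint W)" by (rule mtrace_comm[OF mW], insert X W, simp)
  also have "(X * W) * mat_adjoint W = X * (W * mat_adjoint W)" using mW X W by (simp add: assoc_mult_mat[of _ n n _ n _ n])
  also have "\<dots> = X" using Wu' X by simp
  finally show ?thesis .
qed

lemma core:
  fixes Om rho :: "complex mat" and phi :: "complex vec"
  assumes n1: "n \<ge> 1" and Om: "Om \<in> carrier_mat n n" and pO: "psd n Om" and pI: "psd n (1\<^sub>m n - Om)"
  and phi: "phi \<in> carrier_vec n" and nphi: "conjugate phi \<bullet> phi = 1" and ev: "Om *\<^sub>v phi = phi"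
  and se: "second_eig Om < 1"
  and prho: "psd n rho" and tr1: "mtrace rho = 1" and tr2: "mtrace (Om * rho) = 1"
  shows "rho = proj n phi"
proof -
  obtain W d where W: "W \<in> carrier_mat n n" and Wu: "mat_adjoint W * W = 1\<^sub>m n"
    and eq: "Om = W * dmat n d * mat_adjoint W"
    using spectral[OF Om psd_herm[OF pO]] by blast
  have mW: "mat_adjoint W \<in> carrier_mat n n" using W by simp
  have Wu': "W * mat_adjoint W = 1\<^sub>m n" by (rule mat_mult_left_right_inverse[OF mW W Wu])
  have rho: "rho \<in> carrier_mat n n" using prho psd_carrier by auto
  have WmX: "W * (mat_adjoint W * X) = X" if "X \<in> carrier_mat n n" for X
  proof -
    have "W * (mat_adjoint W * X) = (W * mat_adjoint W) * X" using assoc_mult_mat[OF W mW that] by simp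
    then show ?thesis using Wu' that by simp
  qed
  have mWX: "mat_adjoint W * (W * X) = X" if "X \<in> carrier_mat n n" for X
  proof -
    have "mat_adjoint W * (W * X) = (mat_adjoint W * W) * X" using assoc_mult_mat[OF mW W that] by simp
    then show ?thesis using Wu that by simp
  qed
  define D where "D = dmat n d"
  have Dc: "D \<in> carrier_mat n n" unfolding D_def by simp
  have Deq: "mat_adjoint W * Om * W = D"
    unfolding eq D_def using W mW by (simp add: assoc_mult_mat[of _ n n _ n _ n] WmX mWX Wu Wu')
  have pD: "psd n D" using psd_conj[OF pO W] Deq by simp
  have IDeq: "mat_adjoint W * (1\<^sub>m n - Om) * W = 1\<^sub>m n - D"
  proof -
    have "mat_adjoint W * (1\<^sub>m n - Om) * W = (mat_adjoint W * 1\<^sub>m n - mat_adjoint W * Om) * W"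
      by (subst mult_minus_distrib_mat[OF mW], insert Om, auto)
    also have "\<dots> = mat_adjoint W * 1\<^sub>m n * W - mat_adjoint W * Om * W"
      by (rule minus_mult_distrib_mat, insert mW Om W, auto)
    also have "\<dots> = 1\<^sub>m n - D" using Deq Wu mW W by simp
    finally show ?thesis .
  qed
  have pID: "psd n (1\<^sub>m n - D)" using psd_conj[OF pI W] IDeq by simp
  have dIm: "Im (d i) = 0" and dRe: "Re (d i) \<le> 1" if i: "i < n" for i
  proof -
    show "Im (d i) = 0" using psd_diag(1)[OF pD i] i unfolding D_def by simp
    show "Re (d i) \<le> 1" using psd_diag(2)[OF pID i] i Dc unfolding D_def by simp
  qed
  have dreal: "d i = complex_of_real (Re (d i))" if "i < n" for i
    using dIm[OF that] by (simp add: complex_eq_iff)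
  define K where "K = {i. i < n \<and> d i = 1}"
  have Kle: "card K \<le> 1"
  proof (cases "n \<ge> 2")
    case True
    show ?thesis
    proof (rule ccontr)
      assume "\<not> card K \<le> 1"
      then have "card K \<ge> 2" by simp
      then have "second_eig Om = 1"
        by (intro second_eig_one[OF Om True W Wu Wu' eq], insert dreal dRe, auto simp: K_def)
      then show False using se by simp
    qed
  next
    case False
    then have "K \<subseteq> {0}" unfolding K_def by auto
    then show ?thesis using card_mono[of "{0}" K] by simp
  qed
  define sigma where "sigma = mat_adjoint W * rho * W"
  have sig: "sigma \<in> carrier_mat n n" unfolding sigma_def using mW rho W by simp
  have psig: "psd n sigma" unfolding sigma_def by (rule psd_conj[OF prho W])
  have trs: "mtrace sigma = 1" unfolding sigma_def using mtrace_conj[OF rho W Wu'] tr1 by simp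
  have DS: "D * sigma = mat_adjoint W * (Om * rho) * W"
    unfolding sigma_def Deq[symmetric] using W mW Om rho
    by (simp add: assoc_mult_mat[of _ n n _ n _ n] WmX mWX Wu Wu')
  have trDS: "mtrace (D * sigma) = 1"
    unfolding DS using mtrace_conj[of "Om * rho" n W] Om rho W Wu' tr2 by simp
  have s1: "(\<Sum>i<n. sigma $$ (i,i)) = 1" using trs mtrace_sum[OF sig] by simp
  have s2: "(\<Sum>i<n. d i * sigma $$ (i,i)) = 1"
  proof -
    have "mtrace (D * sigma) = (\<Sum>i<n. \<Sum>l<n. D$$(i,l) * sigma$$(l,i))" by (rule mtrace_mult[OF Dc sig])
    also have "\<dots> = (\<Sum>i<n. d i * sigma $$ (i,i))"
      by (rule sum.cong, simp, unfold D_def, simp)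
    finally show ?thesis using trDS by simp
  qed
  define r where "r i = 1 - Re (d i)" for i
  define s where "s i = Re (sigma $$ (i,i))" for i
  have r0: "r i \<ge> 0" if "i < n" for i using dRe[OF that] r_def by simp
  have s0: "s i \<ge> 0" if "i < n" for i using psd_diag(2)[OF psig that] s_def by simp
  have sIm: "Im (sigma $$ (i,i)) = 0" if "i < n" for i using psd_diag(1)[OF psig that] .
  have "(\<Sum>i<n. (1 - d i) * sigma $$ (i,i)) = 0"
    using s1 s2 by (simp add: left_diff_distrib sum_subtractf)
  moreover have "(1 - d i) * sigma $$ (i,i) = complex_of_real (r i * s i)" if "i < n" for i
    using dIm[OF that] sIm[OF that] unfolding r_def s_def by (simp add: complex_eq_iff)
  ultimately have "complex_of_real (\<Sum>i<n. r i * s i) = 0" by simp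
  then have "(\<Sum>i<n. r i * s i) = 0" by (simp only: of_real_eq_0_iff)
  then have rs0: "r i * s i = 0" if "i < n" for i
    using sum_nonneg_eq_0_iff[of "{..<n}" "\<lambda>i. r i * s i"] r0 s0 that by auto
  define y where "y = mat_adjoint W *\<^sub>v phi"
  have y: "y \<in> carrier_vec n" unfolding y_def using mW phi by simp
  have phiy: "W *\<^sub>v y = phi" unfolding y_def using W mW phi Wu'
    by (simp add: assoc_mult_mat_vec[of _ n n _ n, symmetric])
  have Dy: "D *\<^sub>v y = y"
  proof -
    have "D *\<^sub>v y = mat_adjoint W *\<^sub>v (Om *\<^sub>v (W *\<^sub>v y))"
      unfolding Deq[symmetric] using mW Om W y by (simp add: assoc_mult_mat_vec[of _ n n _ n])
    then show ?thesis using phiy ev unfolding y_def by simp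
  qed
  have dy: "d i * y $ i = y $ i" if i: "i < n" for i
  proof -
    have "(D *\<^sub>v y) $ i = (\<Sum>l<n. D$$(i,l) * y$l)" by (rule mult_vec_idx[OF Dc y i])
    also have "\<dots> = d i * y $ i" unfolding D_def using i by simp
    finally show ?thesis using Dy by simp
  qed
  have ny: "conjugate y \<bullet> y = 1"
  proof -
    have "conjugate y \<bullet> y = conjugate phi \<bullet> (W *\<^sub>v y)"
      unfolding y_def using adj_move[OF mW phi, of "mat_adjoint W *\<^sub>v phi"] mW phi by simp
    then show ?thesis using phiy nphi by simp
  qed
  obtain i0 where i0: "i0 < n" "y $ i0 \<noteq> 0"
  proof (rule ccontr)
    assume "\<not> thesis"
    then have "\<forall>i<n. y $ i = 0" using that by blast
    then have "conjugate y \<bullet> y = 0" using y by (simp add: sprod_sum[OF y])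
    then show False using ny by simp
  qed
  have di0: "d i0 = 1" using dy[OF i0(1)] i0(2) by simp
  have fK: "finite K" unfolding K_def by simp
  have only: "i = i0" if "i < n" "d i = 1" for i
  proof -
    have "i \<in> K" "i0 \<in> K" using that i0 di0 unfolding K_def by auto
    then show ?thesis using Kle fK by (metis card_le_Suc0_iff_eq One_nat_def)
  qed
  have yz: "y $ i = 0" if "i < n" "i \<noteq> i0" for i
  proof -
    have "d i \<noteq> 1" using only that by blast
    then show ?thesis using dy[OF that(1)] by (metis mult_cancel_right2)
  qed
  have sz: "sigma $$ (i,i) = 0" if i: "i < n" "i \<noteq> i0" for i
  proof -
    have "d i \<noteq> 1" using only that by blast
    then have "Re (d i) \<noteq> 1" using dreal[OF i(1)] by (metis of_real_1)
    then have "r i \<noteq> 0" unfolding r_def by simp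
    then have "s i = 0" using rs0[OF i(1)] by simp
    then show ?thesis using sIm[OF i(1)] unfolding s_def by (simp add: complex_eq_iff)
  qed
  have hsig: "mat_adjoint sigma = sigma" by (rule psd_herm[OF psig])
  have sab: "sigma $$ (a,b) = (if a = i0 \<and> b = i0 then 1 else 0)" if a: "a < n" and b: "b < n" for a b
  proof (cases "a = i0 \<and> b = i0")
    case True
    have "(\<Sum>i<n. sigma $$ (i,i)) = sigma $$ (i0,i0)"
      by (subst sum.remove[of _ i0], insert i0, auto simp: sz)
    then show ?thesis using True s1 by simp
  next
    case False
    show ?thesis
    proof (cases "b = i0")
      case False
      then show ?thesis using psd_offdiag[OF psig b a sz[OF b False]] by simp
    next
      case True
      then have "a \<noteq> i0" using \<open>\<not> (a = i0 \<and> b = i0)\<close> by simp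
      have "sigma $$ (b,a) = 0" using psd_offdiag[OF psig a b sz[OF a \<open>a \<noteq> i0\<close>]] .
      moreover have "sigma $$ (a,b) = cnj (sigma $$ (b,a))"
        using hsig sig a b by (metis madj_idx carrier_matD)
      ultimately show ?thesis using \<open>a \<noteq> i0\<close> by simp
    qed
  qed
  have rhoeq: "rho = W * sigma * mat_adjoint W"
    unfolding sigma_def using W mW rho by (simp add: assoc_mult_mat[of _ n n _ n _ n] WmX mWX Wu Wu')
  have phia: "phi $ a = W $$ (a,i0) * y $ i0" if a: "a < n" for a
  proof -
    have "phi $ a = (W *\<^sub>v y) $ a" using phiy by simp
    also have "\<dots> = (\<Sum>k<n. W$$(a,k) * y$k)" by (rule mult_vec_idx[OF W y a])
    also have "\<dots> = W $$ (a,i0) * y $ i0"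
      by (subst sum.remove[of _ i0], insert i0, auto simp: yz)
    finally show ?thesis .
  qed
  have yy: "cnj (y $ i0) * y $ i0 = 1"
  proof -
    have "conjugate y \<bullet> y = (\<Sum>k<n. cnj (y$k) * y$k)" using y by (simp add: sprod_sum[OF y])
    also have "\<dots> = cnj (y $ i0) * y $ i0"
      by (subst sum.remove[of _ i0], insert i0, auto simp: yz)
    finally show ?thesis using ny by simp
  qed
  show ?thesis
  proof (rule eq_matI)
    fix a b assume "a < dim_row (proj n phi)" "b < dim_col (proj n phi)"
    then have a: "a < n" and b: "b < n" by auto
    have WS: "W * sigma \<in> carrier_mat n n" using W sig by simp
    have WSi: "(W * sigma) $$ (a,l) = (if l = i0 then W $$ (a,i0) else 0)" if l: "l < n" for l
    proof -
      have "(W * sigma) $$ (a,l) = (\<Sum>k<n. W$$(a,k) * sigma$$(k,l))" by (rule mult_idx[OF W sig a l])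
      also have "\<dots> = (\<Sum>k<n. if k = i0 \<and> l = i0 then W$$(a,k) else 0)"
        by (rule sum.cong, insert l, auto simp: sab)
      also have "\<dots> = (if l = i0 then W $$ (a,i0) else 0)" using i0 by (cases "l = i0", auto)
      finally show ?thesis .
    qed
    have "rho $$ (a,b) = (W * sigma * mat_adjoint W) $$ (a,b)" using rhoeq by simp
    also have "\<dots> = (\<Sum>l<n. (W * sigma) $$ (a,l) * mat_adjoint W $$ (l,b))" by (rule mult_idx[OF WS mW a b])
    also have "\<dots> = (\<Sum>l<n. if l = i0 then W $$ (a,i0) * cnj (W $$ (b,i0)) else 0)"
      by (rule sum.cong, insert W a b, auto simp: WSi)
    also have "\<dots> = W $$ (a,i0) * cnj (W $$ (b,i0))" using i0 by simp
    also have "\<dots> = proj n phi $$ (a,b)"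
    proof -
      have "proj n phi $$ (a,b) = W $$ (a,i0) * y $ i0 * cnj (W $$ (b,i0) * y $ i0)"
        using a b by (simp add: phia)
      also have "\<dots> = W $$ (a,i0) * cnj (W $$ (b,i0)) * (cnj (y $ i0) * y $ i0)" by (simp add: algebra_simps)
      finally show ?thesis using yy by simp
    qed
    finally show "rho $$ (a,b) = proj n phi $$ (a,b)" .
  qed (use rho in auto)
qed



lemma qf_sum: fixes M :: "complex mat" assumes M: "M \<in> carrier_mat n n" and x: "x \<in> carrier_vec n"
  shows "conjugate x \<bullet> (M *\<^sub>v x) = (\<Sum>a<n. \<Sum>b<n. cnj (x$a) * M$$(a,b) * x$b)"
proof -
  have Mx: "M *\<^sub>v x \<in> carrier_vec n" using M x by simp
  have "conjugate x \<bullet> (M *\<^sub>v x) = (\<Sum>a<n. conjugate x $ a * (M *\<^sub>v x) $ a)" by (rule sprod_sum[OF Mx])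
  also have "\<dots> = (\<Sum>a<n. cnj (x$a) * (\<Sum>b<n. M$$(a,b) * x$b))"
    by (rule sum.cong, insert x M, auto simp del: index_mult_mat_vec simp: mult_vec_idx[OF M x])
  also have "\<dots> = (\<Sum>a<n. \<Sum>b<n. cnj (x$a) * M$$(a,b) * x$b)"
    by (simp add: sum_distrib_left mult.assoc)
  finally show ?thesis .
qed

lemma psd_comb:
  fixes F :: "'l \<Rightarrow> complex mat"
  assumes S: "finite S" and c: "\<And>l. l \<in> S \<Longrightarrow> c l \<ge> 0" and F: "\<And>l. l \<in> S \<Longrightarrow> psd n (F l)"
  shows "psd n (mat n n (\<lambda>(a,b). \<Sum>l\<in>S. complex_of_real (c l) * F l $$ (a,b)))"
proof -
  define M where "M = mat n n (\<lambda>(a,b). \<Sum>l\<in>S. complex_of_real (c l) * F l $$ (a,b))"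
  have M: "M \<in> carrier_mat n n" unfolding M_def by simp
  have Fc: "F l \<in> carrier_mat n n" if "l \<in> S" for l using F[OF that] psd_carrier by auto
  have q: "conjugate x \<bullet> (M *\<^sub>v x) = (\<Sum>l\<in>S. complex_of_real (c l) * (conjugate x \<bullet> (F l *\<^sub>v x)))"
    if x: "x \<in> carrier_vec n" for x
  proof -
    have "conjugate x \<bullet> (M *\<^sub>v x) = (\<Sum>a<n. \<Sum>b<n. cnj (x$a) * M$$(a,b) * x$b)" by (rule qf_sum[OF M x])
    also have "\<dots> = (\<Sum>a<n. \<Sum>b<n. \<Sum>l\<in>S. complex_of_real (c l) * (cnj (x$a) * F l$$(a,b) * x$b))"
      unfolding M_def by (rule sum.cong, simp, rule sum.cong, simp, simp add: sum_distrib_left sum_distrib_right algebra_simps)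
    also have "\<dots> = (\<Sum>a<n. \<Sum>l\<in>S. \<Sum>b<n. complex_of_real (c l) * (cnj (x$a) * F l$$(a,b) * x$b))"
      by (rule sum.cong, simp, rule sum.swap)
    also have "\<dots> = (\<Sum>l\<in>S. \<Sum>a<n. \<Sum>b<n. complex_of_real (c l) * (cnj (x$a) * F l$$(a,b) * x$b))"
      by (rule sum.swap)
    also have "\<dots> = (\<Sum>l\<in>S. complex_of_real (c l) * (conjugate x \<bullet> (F l *\<^sub>v x)))"
      by (rule sum.cong, simp, simp add: qf_sum[OF Fc x] sum_distrib_left)
    finally show ?thesis .
  qed
  have "Im (conjugate x \<bullet> (M *\<^sub>v x)) = 0 \<and> Re (conjugate x \<bullet> (M *\<^sub>v x)) \<ge> 0" if x: "x \<in> carrier_vec n" for x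
  proof -
    have h: "Im (conjugate x \<bullet> (F l *\<^sub>v x)) = 0 \<and> Re (conjugate x \<bullet> (F l *\<^sub>v x)) \<ge> 0" if "l \<in> S" for l
      using F[OF that] x unfolding psd_def by blast
    have "Im (conjugate x \<bullet> (M *\<^sub>v x)) = (\<Sum>l\<in>S. c l * Im (conjugate x \<bullet> (F l *\<^sub>v x)))"
      unfolding q[OF x] by (simp add: Im_sum)
    also have "\<dots> = 0" using h by simp
    finally have 1: "Im (conjugate x \<bullet> (M *\<^sub>v x)) = 0" .
    have "Re (conjugate x \<bullet> (M *\<^sub>v x)) = (\<Sum>l\<in>S. c l * Re (conjugate x \<bullet> (F l *\<^sub>v x)))"
      unfolding q[OF x] by (simp add: Re_sum)
    also have "\<dots> \<ge> 0" using h c by (intro sum_nonneg mult_nonneg_nonneg) auto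
    finally show ?thesis using 1 by simp
  qed
  then show ?thesis using M unfolding psd_def M_def by auto
qed

context
  fixes n :: nat and U :: "complex mat" and J :: "'j set" and \<psi> :: "'j \<Rightarrow> complex vec"
    and p :: "'j \<Rightarrow> real" and L :: "'j \<Rightarrow> 'l set" and q :: "'j \<Rightarrow> 'l \<Rightarrow> real"
    and E :: "'j \<Rightarrow> 'l \<Rightarrow> complex mat"
  assumes n1: "n \<ge> 1" and Uu: "unitary_mat n U" and VP: "verification_protocol n U J \<psi> p L q E"
begin

lemma U: "U \<in> carrier_mat n n" using Uu unfolding unitary_mat_def by auto
lemma UU: "mat_adjoint U * U = 1\<^sub>m n" using Uu unfolding unitary_mat_def by auto

lemma psi: "j \<in> J \<Longrightarrow> \<psi> j \<in> carrier_vec n" using VP unfolding verification_protocol_def pure_state_def by auto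
lemma npsi: "j \<in> J \<Longrightarrow> conjugate (\<psi> j) \<bullet> \<psi> j = 1" using VP unfolding verification_protocol_def pure_state_def by auto

lemma Om_carrier: "Omega n L q E j \<in> carrier_mat n n" unfolding Omega_def by simp

lemma phi_c: "j \<in> J \<Longrightarrow> U *\<^sub>v \<psi> j \<in> carrier_vec n" using U psi by simp

lemma nphi: assumes j: "j \<in> J" shows "conjugate (U *\<^sub>v \<psi> j) \<bullet> (U *\<^sub>v \<psi> j) = 1"
proof -
  have "conjugate (U *\<^sub>v \<psi> j) \<bullet> (U *\<^sub>v \<psi> j) = conjugate (\<psi> j) \<bullet> (mat_adjoint U *\<^sub>v (U *\<^sub>v \<psi> j))"
    by (rule adj_move[OF U psi[OF j] phi_c[OF j]])
  also have "mat_adjoint U *\<^sub>v (U *\<^sub>v \<psi> j) = \<psi> j"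
    using UU U psi[OF j] by (simp add: assoc_mult_mat_vec[of _ n n _ n, symmetric])
  finally show ?thesis using npsi[OF j] by simp
qed

lemma Ejl: assumes "j \<in> J" "l \<in> L j"
  shows "effect n (E j l)" "E j l *\<^sub>v (U *\<^sub>v \<psi> j) = U *\<^sub>v \<psi> j" "q j l > 0"
  using VP assms unfolding verification_protocol_def by auto

lemma Lj: assumes "j \<in> J" shows "finite (L j)" "(\<Sum>l\<in>L j. q j l) = 1"
  using VP assms unfolding verification_protocol_def by auto

lemma Ec: "j \<in> J \<Longrightarrow> l \<in> L j \<Longrightarrow> E j l \<in> carrier_mat n n"
  using Ejl(1) unfolding effect_def using psd_carrier by blast

lemma Om_psd: assumes j: "j \<in> J" shows "psd n (Omega n L q E j)"
  unfolding Omega_def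
  by (rule psd_comb[OF Lj(1)[OF j]], insert Ejl[OF j], auto simp: effect_def less_imp_le)

lemma Om_psdI: assumes j: "j \<in> J" shows "psd n (1\<^sub>m n - Omega n L q E j)"
proof -
  have "1\<^sub>m n - Omega n L q E j = mat n n (\<lambda>(a,b). \<Sum>l\<in>L j. complex_of_real (q j l) * (1\<^sub>m n - E j l) $$ (a,b))"
  proof (rule eq_matI)
    fix a b assume "a < dim_row (mat n n (\<lambda>(a,b). \<Sum>l\<in>L j. complex_of_real (q j l) * (1\<^sub>m n - E j l) $$ (a,b)))"
      "b < dim_col (mat n n (\<lambda>(a,b). \<Sum>l\<in>L j. complex_of_real (q j l) * (1\<^sub>m n - E j l) $$ (a,b)))"
    then have a: "a < n" and b: "b < n" by auto
    have "(\<Sum>l\<in>L j. complex_of_real (q j l) * (1\<^sub>m n - E j l) $$ (a,b))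
       = (\<Sum>l\<in>L j. complex_of_real (q j l) * ((if a = b then 1 else 0) - E j l $$ (a,b)))"
    proof (rule sum.cong)
      fix l assume l: "l \<in> L j"
      have El: "E j l \<in> carrier_mat n n" by (rule Ec[OF j l])
      then show "complex_of_real (q j l) * (1\<^sub>m n - E j l) $$ (a,b) = complex_of_real (q j l) * ((if a = b then 1 else 0) - E j l $$ (a,b))"
        using a b by simp
    qed simp
    also have "\<dots> = complex_of_real (\<Sum>l\<in>L j. q j l) * (if a = b then 1 else 0) - (\<Sum>l\<in>L j. complex_of_real (q j l) * E j l $$ (a,b))"
      by (simp add: right_diff_distrib sum_subtractf sum_distrib_right)
    also have "\<dots> = (1\<^sub>m n - Omega n L q E j) $$ (a,b)"
      using a b Lj(2)[OF j] unfolding Omega_def by simp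
    finally show "(1\<^sub>m n - Omega n L q E j) $$ (a,b) = mat n n (\<lambda>(a,b). \<Sum>l\<in>L j. complex_of_real (q j l) * (1\<^sub>m n - E j l) $$ (a,b)) $$ (a,b)"
      using a b by simp
  qed (auto simp: Omega_def)
  also have "psd n \<dots>"
    by (rule psd_comb[OF Lj(1)[OF j]], insert Ejl[OF j], auto simp: effect_def less_imp_le)
  finally show ?thesis .
qed

lemma Om_fix: assumes j: "j \<in> J" shows "Omega n L q E j *\<^sub>v (U *\<^sub>v \<psi> j) = U *\<^sub>v \<psi> j"
proof (rule eq_vecI)
  define phi where "phi = U *\<^sub>v \<psi> j"
  have phi: "phi \<in> carrier_vec n" unfolding phi_def by (rule phi_c[OF j])
  fix a assume "a < dim_vec (U *\<^sub>v \<psi> j)"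
  then have a: "a < n" using U by simp
  have "(Omega n L q E j *\<^sub>v phi) $ a = (\<Sum>b<n. Omega n L q E j $$ (a,b) * phi $ b)"
    by (rule mult_vec_idx[OF Om_carrier phi a])
  also have "\<dots> = (\<Sum>b<n. \<Sum>l\<in>L j. complex_of_real (q j l) * (E j l $$ (a,b) * phi $ b))"
    using a unfolding Omega_def by (simp add: sum_distrib_right mult.assoc)
  also have "\<dots> = (\<Sum>l\<in>L j. complex_of_real (q j l) * (\<Sum>b<n. E j l $$ (a,b) * phi $ b))"
    by (subst sum.swap, simp add: sum_distrib_left)
  also have "\<dots> = (\<Sum>l\<in>L j. complex_of_real (q j l) * phi $ a)"
  proof (rule sum.cong)
    fix l assume l: "l \<in> L j"
    have "(\<Sum>b<n. E j l $$ (a,b) * phi $ b) = (E j l *\<^sub>v phi) $ a" by (rule mult_vec_idx[OF Ec[OF j l] phi a, symmetric])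
    also have "\<dots> = phi $ a" using Ejl(2)[OF j l] unfolding phi_def by simp
    finally show "complex_of_real (q j l) * (\<Sum>b<n. E j l $$ (a,b) * phi $ b) = complex_of_real (q j l) * phi $ a" by simp
  qed simp
  also have "\<dots> = complex_of_real (\<Sum>l\<in>L j. q j l) * phi $ a" by (simp add: sum_distrib_right)
  also have "\<dots> = phi $ a" using Lj(2)[OF j] by simp
  finally show "(Omega n L q E j *\<^sub>v (U *\<^sub>v \<psi> j)) $ a = (U *\<^sub>v \<psi> j) $ a" unfolding phi_def .
qed (insert U, simp add: Omega_def)

lemma uc_proj: "j \<in> J \<Longrightarrow> unitary_channel U (proj n (\<psi> j)) = proj n (U *\<^sub>v \<psi> j)"
  unfolding unitary_channel_def by (rule proj_unitary[OF U psi])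

lemma P1: assumes j: "j \<in> J" shows "pass_prob n L q E \<psi> (unitary_channel U) j = 1"
proof -
  have "pass_prob n L q E \<psi> (unitary_channel U) j = mtrace (Omega n L q E j * proj n (U *\<^sub>v \<psi> j))"
    unfolding pass_prob_def uc_proj[OF j] ..
  also have "\<dots> = conjugate (U *\<^sub>v \<psi> j) \<bullet> (Omega n L q E j *\<^sub>v (U *\<^sub>v \<psi> j))"
    by (rule mtrace_proj[OF phi_c[OF j] Om_carrier])
  also have "\<dots> = 1" using Om_fix[OF j] nphi[OF j] by simp
  finally show ?thesis .
qed

lemma chan_psd: assumes ch: "quantum_channel n \<Lambda>" and X: "psd n X" shows "psd n (\<Lambda> X)"
proof -
  have Xc: "X \<in> carrier_mat n n" using X psd_carrier by auto
  have LX: "\<Lambda> X \<in> carrier_mat n n" using ch Xc unfolding quantum_channel_def by auto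
  have "psd (n*1) (ampl n 1 \<Lambda> X)" using ch X unfolding quantum_channel_def by auto
  moreover have "blk n 1 X 0 0 = X" unfolding blk_def using Xc by (intro eq_matI) auto
  then have "ampl n 1 \<Lambda> X = \<Lambda> X" unfolding ampl_def using LX by (intro eq_matI) auto
  ultimately show ?thesis by simp
qed

lemma P2: assumes j: "j \<in> J" and ch: "quantum_channel n \<Lambda>" and pass: "pass_prob n L q E \<psi> \<Lambda> j = 1"
  and eff: "nu n L q E j > 0"
  shows "\<Lambda> (proj n (\<psi> j)) = unitary_channel U (proj n (\<psi> j))"
proof -
  have prho: "psd n (\<Lambda> (proj n (\<psi> j)))" by (rule chan_psd[OF ch psd_proj[OF psi[OF j]]])
  have "mtrace (\<Lambda> (proj n (\<psi> j))) = mtrace (proj n (\<psi> j))" using ch unfolding quantum_channel_def by auto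
  also have "\<dots> = mtrace (1\<^sub>m n * proj n (\<psi> j))" by simp
  also have "\<dots> = 1" using mtrace_proj[OF psi[OF j], of "1\<^sub>m n"] npsi[OF j] psi[OF j] by simp
  finally have tr1: "mtrace (\<Lambda> (proj n (\<psi> j))) = 1" .
  have tr2: "mtrace (Omega n L q E j * \<Lambda> (proj n (\<psi> j))) = 1" using pass unfolding pass_prob_def .
  have se: "second_eig (Omega n L q E j) < 1" using eff unfolding nu_def by simp
  have "\<Lambda> (proj n (\<psi> j)) = proj n (U *\<^sub>v \<psi> j)"
    by (rule core[OF n1 Om_carrier Om_psd[OF j] Om_psdI[OF j] phi_c[OF j] nphi[OF j] Om_fix[OF j] se prho tr1 tr2])
  then show ?thesis using uc_proj[OF j] by simp
qed

lemma part1: "verified_reliably n U J \<psi> L q E \<Longrightarrow> identification_set n U (\<psi> ` J)"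
proof -
  assume vr: "verified_reliably n U J \<psi> L q E"
  show ?thesis unfolding identification_set_def
  proof (intro conjI allI impI ballI)
    fix x assume "x \<in> \<psi> ` J" then show "pure_state n x" using VP unfolding verification_protocol_def by auto
  next
    fix \<Lambda> \<rho> assume h: "quantum_channel n \<Lambda> \<and> (\<forall>x\<in>\<psi> ` J. \<Lambda> (proj n x) = unitary_channel U (proj n x))"
      and rho: "density_op n \<rho>"
    have "pass_prob n L q E \<psi> \<Lambda> j = 1" if j: "j \<in> J" for j
    proof -
      have "pass_prob n L q E \<psi> \<Lambda> j = pass_prob n L q E \<psi> (unitary_channel U) j"
        unfolding pass_prob_def using h j by simp
      then show ?thesis using vr j unfolding verified_reliably_def by simp
    qed
    then show "\<Lambda> \<rho> = unitary_channel U \<rho>" using vr h rho unfolding verified_reliably_def by blast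
  qed
qed

lemma part2: "identification_set n U (effective_set n J \<psi> L q E) \<Longrightarrow> verified_reliably n U J \<psi> L q E"
proof -
  assume ids: "identification_set n U (effective_set n J \<psi> L q E)"
  show ?thesis unfolding verified_reliably_def
  proof (intro conjI ballI allI impI)
    fix j assume "j \<in> J" then show "pass_prob n L q E \<psi> (unitary_channel U) j = 1" by (rule P1)
  next
    fix \<Lambda> \<rho> assume h: "quantum_channel n \<Lambda> \<and> (\<forall>j\<in>J. pass_prob n L q E \<psi> \<Lambda> j = 1)"
      and rho: "density_op n \<rho>"
    have "\<forall>x\<in>effective_set n J \<psi> L q E. \<Lambda> (proj n x) = unitary_channel U (proj n x)"
      unfolding effective_set_def using P2 h by auto
    then show "\<Lambda> \<rho> = unitary_channel U \<rho>" using ids h rho unfolding identification_set_def by blast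
  qed
qed

lemma main: "(verified_reliably n U J \<psi> L q E \<longrightarrow> identification_set n U (\<psi> ` J))
    \<and> (identification_set n U (effective_set n J \<psi> L q E) \<longrightarrow> verified_reliably n U J \<psi> L q E)
    \<and> (ordinary n J L q E \<longrightarrow> (verified_reliably n U J \<psi> L q E \<longleftrightarrow> identification_set n U (\<psi> ` J)))"
proof (intro conjI impI)
  show "verified_reliably n U J \<psi> L q E \<Longrightarrow> identification_set n U (\<psi> ` J)" by (rule part1)
  show "identification_set n U (effective_set n J \<psi> L q E) \<Longrightarrow> verified_reliably n U J \<psi> L q E" by (rule part2)
  assume "ordinary n J L q E"
  then have "effective_set n J \<psi> L q E = \<psi> ` J" unfolding ordinary_def effective_set_def by auto
  then show "verified_reliably n U J \<psi> L q E \<longleftrightarrow> identification_set n U (\<psi> ` J)" using part1 part2 by auto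
qed

end

theorem lemma1:
  fixes n :: nat and U :: "complex mat" and J :: "'j set" and \<psi> :: "'j \<Rightarrow> complex vec"
    and p :: "'j \<Rightarrow> real" and L :: "'j \<Rightarrow> 'l set" and q :: "'j \<Rightarrow> 'l \<Rightarrow> real"
    and E :: "'j \<Rightarrow> 'l \<Rightarrow> complex mat"
  assumes "n \<ge> 1"
    and "unitary_mat n U"
    and "verification_protocol n U J \<psi> p L q E"
  shows "(verified_reliably n U J \<psi> L q E \<longrightarrow> identification_set n U (\<psi> ` J))
    \<and> (identification_set n U (effective_set n J \<psi> L q E) \<longrightarrow> verified_reliably n U J \<psi> L q E)
    \<and> (ordinary n J L q E \<longrightarrow> (verified_reliably n U J \<psi> L q E \<longleftrightarrow> identification_set n U (\<psi> ` J)))"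
  by (rule main[OF assms])


end
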